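(* Let $\mathcal{A}$ be a commutative unital $C^*$-algebra and let $F\in B^a(H_{\mathcal{A}})$ be normal, i.e. $FF^*=F^*F$. If $\alpha_1,\alpha_2\in\sigma_p^{\mathcal{A}}(F)$ and $\alpha_1-\alpha_2$ is invertible in $\mathcal{A}$, then $\ker(F-\alpha_1I)\perp\ker(F-\alpha_2I)$, i.e. $\langle x_2,x_1\rangle=0$ for all $x_1\in\ker(F-\alpha_1I)$, $x_2\in\ker(F-\alpha_2I)$.
   Context: $H_{\mathcal{A}}=l_2(\mathcal{A})$ is the standard Hilbert $C^*$-module of sequences $(x_1,x_2,\dots)$ in $\mathcal{A}$ with $\sum_k x_k^*x_k$ norm-convergent, inner product $\langle x,y\rangle=\sum_k x_k^*y_k$. $B^a(H_{\mathcal{A}})$ denotes the bounded adjointable $\mathcal{A}$-linear operators on $H_{\mathcal{A}}$. For $\alpha\in\mathcal{A}$, $\alpha I$ is the operator $(x_k)\mapsto(\alpha x_k)$. $\sigma_p^{\mathcal{A}}(F)=\{\alpha\in\mathcal{A}\mid\ker(F-\alpha I)\ne\{0\}\}$. *)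

theory Defs
  imports "HOL-Analysis.Analysis"
begin

text \<open>Commutative unital C*-algebra. The carrier type is a commutative unital real Banach
algebra; the complex scalar action sc and the involution st are parameters
satisfying the C*-algebra axioms.\<close>

definition comm_unital_cstar_algebra ::
  "(complex \<Rightarrow> 'a::{real_normed_algebra_1,comm_ring_1,banach} \<Rightarrow> 'a) \<Rightarrow> ('a \<Rightarrow> 'a) \<Rightarrow> bool" where
  "comm_unital_cstar_algebra sc st \<longleftrightarrow>
     (\<forall>a b x. sc (a + b) x = sc a x + sc b x) \<and>
     (\<forall>a x y. sc a (x + y) = sc a x + sc a y) \<and>
     (\<forall>a b x. sc (a * b) x = sc a (sc b x)) \<and>
     (\<forall>x. sc 1 x = x) \<and>
     (\<forall>r x. sc (complex_of_real r) x = scaleR r x) \<and>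
     (\<forall>a x. norm (sc a x) = cmod a * norm x) \<and>
     (\<forall>a x y. sc a (x * y) = sc a x * y) \<and>
     (\<forall>x. st (st x) = x) \<and>
     (\<forall>x y. st (x + y) = st x + st y) \<and>
     (\<forall>a x. st (sc a x) = sc (cnj a) (st x)) \<and>
     (\<forall>x y. st (x * y) = st y * st x) \<and>
     (\<forall>x. norm (st x * x) = (norm x)\<^sup>2)"

definition HA :: "('a::{real_normed_algebra_1,comm_ring_1,banach} \<Rightarrow> 'a) \<Rightarrow> (nat \<Rightarrow> 'a) set" where
  "HA st = {x. summable (\<lambda>k. st (x k) * x k)}"

definition ipA :: "('a::{real_normed_algebra_1,comm_ring_1,banach} \<Rightarrow> 'a) \<Rightarrow> (nat \<Rightarrow> 'a) \<Rightarrow> (nat \<Rightarrow> 'a) \<Rightarrow> 'a" where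
  "ipA st x y = (\<Sum>k. st (x k) * y k)"

definition adjointable_with ::
  "('a::{real_normed_algebra_1,comm_ring_1,banach} \<Rightarrow> 'a) \<Rightarrow> ((nat \<Rightarrow> 'a) \<Rightarrow> (nat \<Rightarrow> 'a))
     \<Rightarrow> ((nat \<Rightarrow> 'a) \<Rightarrow> (nat \<Rightarrow> 'a)) \<Rightarrow> bool" where
  "adjointable_with st F G \<longleftrightarrow>
     F ` HA st \<subseteq> HA st \<and> G ` HA st \<subseteq> HA st \<and>
     (\<forall>x\<in>HA st. \<forall>y\<in>HA st. ipA st (F x) y = ipA st x (G y))"

definition A_linear_op ::
  "('a::{real_normed_algebra_1,comm_ring_1,banach} \<Rightarrow> 'a) \<Rightarrow> ((nat \<Rightarrow> 'a) \<Rightarrow> (nat \<Rightarrow> 'a)) \<Rightarrow> bool" where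
  "A_linear_op st F \<longleftrightarrow>
     (\<forall>x\<in>HA st. \<forall>y\<in>HA st. \<forall>a b.
        F (\<lambda>k. x k * a + y k * b) = (\<lambda>k. F x k * a + F y k * b))"

definition bounded_op ::
  "('a::{real_normed_algebra_1,comm_ring_1,banach} \<Rightarrow> 'a) \<Rightarrow> ((nat \<Rightarrow> 'a) \<Rightarrow> (nat \<Rightarrow> 'a)) \<Rightarrow> bool" where
  "bounded_op st F \<longleftrightarrow>
     (\<exists>C. \<forall>x\<in>HA st. sqrt (norm (ipA st (F x) (F x))) \<le> C * sqrt (norm (ipA st x x)))"

definition scal_op :: "'a::{real_normed_algebra_1,comm_ring_1,banach} \<Rightarrow> (nat \<Rightarrow> 'a) \<Rightarrow> (nat \<Rightarrow> 'a)" where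
  "scal_op \<alpha> x = (\<lambda>k. \<alpha> * x k)"

definition kerA ::
  "('a::{real_normed_algebra_1,comm_ring_1,banach} \<Rightarrow> 'a) \<Rightarrow> ((nat \<Rightarrow> 'a) \<Rightarrow> (nat \<Rightarrow> 'a)) \<Rightarrow> (nat \<Rightarrow> 'a) set" where
  "kerA st T = {x\<in>HA st. T x = (\<lambda>k. 0)}"

definition sigma_pA ::
  "('a::{real_normed_algebra_1,comm_ring_1,banach} \<Rightarrow> 'a) \<Rightarrow> ((nat \<Rightarrow> 'a) \<Rightarrow> (nat \<Rightarrow> 'a)) \<Rightarrow> 'a set" where
  "sigma_pA st F = {\<alpha>. kerA st (\<lambda>x. (\<lambda>k. F x k - scal_op \<alpha> x k)) \<noteq> {(\<lambda>k. 0)}}"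

end

theory Submission
  imports Defs
begin

locale cstar =
  fixes sc :: "complex \<Rightarrow> 'a::{real_normed_algebra_1,comm_ring_1,banach} \<Rightarrow> 'a"
    and st :: "'a \<Rightarrow> 'a"
  assumes C: "comm_unital_cstar_algebra sc st"
begin

lemma sc_add1: "sc (a + b) x = sc a x + sc b x" using C unfolding comm_unital_cstar_algebra_def by auto
lemma sc_mult: "sc (a * b) x = sc a (sc b x)" using C unfolding comm_unital_cstar_algebra_def by auto
lemma sc_one: "sc 1 x = x" using C unfolding comm_unital_cstar_algebra_def by auto
lemma sc_real: "sc (complex_of_real r) x = scaleR r x" using C unfolding comm_unital_cstar_algebra_def by auto
lemma sc_norm: "norm (sc a x) = cmod a * norm x" using C unfolding comm_unital_cstar_algebra_def by auto
lemma sc_mul: "sc a (x * y) = sc a x * y" using C unfolding comm_unital_cstar_algebra_def by auto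
lemma st_st[simp]: "st (st x) = x" using C unfolding comm_unital_cstar_algebra_def by auto
lemma st_add[simp]: "st (x + y) = st x + st y" using C unfolding comm_unital_cstar_algebra_def by auto
lemma st_sc: "st (sc a x) = sc (cnj a) (st x)" using C unfolding comm_unital_cstar_algebra_def by auto
lemma st_mult_rev: "st (x * y) = st y * st x" using C unfolding comm_unital_cstar_algebra_def by auto
lemma cstar_id: "norm (st x * x) = (norm x)\<^sup>2" using C unfolding comm_unital_cstar_algebra_def by auto

lemma st_mult[simp]: "st (x * y) = st x * st y"
  by (simp add: st_mult_rev mult.commute)

lemma st_scaleR[simp]: "st (scaleR r x) = scaleR r (st x)"
  by (metis sc_real st_sc complex_cnj_complex_of_real)

lemma st_zero[simp]: "st 0 = 0"
  by (metis add_cancel_right_right st_add)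

lemma st_minus[simp]: "st (- x) = - st x"
  by (metis add_eq_0_iff2 st_add st_zero add.right_inverse)

lemma st_diff[simp]: "st (x - y) = st x - st y"
  by (metis diff_conv_add_uminus st_add st_minus)

lemma st_one[simp]: "st 1 = 1"
proof -
  have "st (st 1 * 1) = st (st 1) * st 1" by (rule st_mult)
  then show ?thesis by simp
qed

lemma st_sum: "st (sum f S) = sum (\<lambda>i. st (f i)) S"
  by (induction S rule: infinite_finite_induct) auto

lemma norm_st[simp]: "norm (st x) = norm x"
proof -
  have le: "norm y \<le> norm (st y)" for y
  proof (cases "y = 0")
    case True then show ?thesis by simp
  next
    case False
    have "(norm y)\<^sup>2 \<le> norm (st y) * norm y" using cstar_id[of y] norm_mult_ineq[of "st y" y] by simp
    then show ?thesis using False by (simp add: power2_eq_square)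
  qed
  show ?thesis using le[of x] le[of "st x"] by simp
qed

lemma bl_st: "bounded_linear st"
  by (rule bounded_linear_intro[where K=1]) auto

lemma st_suminf: "summable f \<Longrightarrow> st (suminf f) = (\<Sum>n. st (f n))"
  using bounded_linear.suminf[OF bl_st] by blast

lemma summable_st: "summable f \<Longrightarrow> summable (\<lambda>n. st (f n))"
  using bounded_linear.summable[OF bl_st] by blast

definition io :: "complex \<Rightarrow> 'a" where "io z = sc z 1"

lemma sc_io: "sc z x = io z * x"
  by (metis io_def mult_1 sc_mul)

lemma io_mult: "io (a * b) = io a * io b"
  by (metis io_def sc_io sc_mult)

lemma io_add: "io (a + b) = io a + io b"
  by (simp add: io_def sc_add1)

lemma io_real: "io (complex_of_real r) = scaleR r 1"
  by (simp add: io_def sc_real)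

lemma io_one[simp]: "io 1 = 1" by (simp add: io_def sc_one)

lemma io_zero[simp]: "io 0 = 0" using io_real[of 0] by simp

lemma io_minus: "io (- a) = - io a"
  by (metis add.right_inverse add_eq_0_iff2 io_add io_zero)

lemma io_diff: "io (a - b) = io a - io b"
  by (metis diff_conv_add_uminus io_add io_minus)

lemma io_power: "io (a ^ n) = io a ^ n"
  by (induction n) (auto simp: io_mult)

lemma io_sum: "io (sum f S) = sum (\<lambda>i. io (f i)) S"
  by (induction S rule: infinite_finite_induct) (auto simp: io_add)

lemma io_of_nat: "io (of_nat n) = of_nat n"
  using io_real[of "real n"] by (simp add: of_real_def[symmetric])

lemma st_io: "st (io a) = io (cnj a)"
  by (simp add: io_def st_sc)

lemma norm_io: "norm (io a) = cmod a"
  by (simp add: io_def sc_norm)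

definition II :: 'a where "II = io \<i>"

lemma II_sq: "II * II = - 1"
proof -
  have "II * II = io (\<i> * \<i>)" unfolding II_def by (rule io_mult[symmetric])
  also have "\<dots> = io (- 1)" by simp
  also have "\<dots> = -1" by (simp add: io_minus)
  finally show ?thesis .
qed

lemma st_II: "st II = - II"
  by (simp add: II_def st_io io_minus)

end

context cstar begin

definition Acc :: "'a \<Rightarrow> bool" where
  "Acc x \<longleftrightarrow> (\<forall>e>0. \<exists>d>0. \<forall>s. 0 < s \<and> s < d \<longrightarrow> norm (1 - scaleR s x) \<le> 1 + s * e)"

lemma Acc_zero: "Acc 0"
  unfolding Acc_def by (auto intro!: exI[of _ 1])

lemma Acc_add:
  assumes "Acc x" "Acc y" shows "Acc (x + y)"
  unfolding Acc_def
proof (intro allI impI)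
  fix e :: real assume e: "e > 0"
  define e' where "e' = e / 4"
  have e': "e' > 0" using e by (simp add: e'_def)
  obtain d1 where d1: "d1 > 0" "\<And>s. 0 < s \<Longrightarrow> s < d1 \<Longrightarrow> norm (1 - scaleR s x) \<le> 1 + s * e'"
    using assms(1) e' unfolding Acc_def by blast
  obtain d2 where d2: "d2 > 0" "\<And>s. 0 < s \<Longrightarrow> s < d2 \<Longrightarrow> norm (1 - scaleR s y) \<le> 1 + s * e'"
    using assms(2) e' unfolding Acc_def by blast
  define K where "K = norm x * norm y"
  have K: "K \<ge> 0" by (simp add: K_def)
  define d where "d = min d1 (min d2 (min (1 / (e' + 1)) (e' / (K + 1))))"
  have "d > 0" using d1 d2 e' K by (simp add: d_def)
  moreover have "norm (1 - scaleR s (x + y)) \<le> 1 + s * e" if s: "0 < s" "s < d" for s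
  proof -
    have eq: "1 - scaleR s (x + y) = (1 - scaleR s x) * (1 - scaleR s y) - scaleR (s * s) (x * y)"
      by (simp add: algebra_simps)
    have n1: "norm (1 - scaleR s x) \<le> 1 + s * e'" using d1 s by (simp add: d_def)
    have n2: "norm (1 - scaleR s y) \<le> 1 + s * e'" using d2 s by (simp add: d_def)
    have "norm ((1 - scaleR s x) * (1 - scaleR s y)) \<le> (1 + s * e') * (1 + s * e')"
    proof (rule order_trans[OF norm_mult_ineq])
      show "norm (1 - scaleR s x) * norm (1 - scaleR s y) \<le> (1 + s * e') * (1 + s * e')"
        by (rule mult_mono[OF n1 n2 _ norm_ge_zero]) (use s e' in simp)
    qed
    moreover have "norm (scaleR (s * s) (x * y)) \<le> s * s * K"
      using norm_mult_ineq[of x y] s by (simp add: K_def mult_left_mono)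
    moreover have "s * e' \<le> 1"
    proof -
      have "s < 1 / (e' + 1)" using s by (simp add: d_def)
      then have "s * (e' + 1) < 1" using e' by (simp add: field_simps)
      then show ?thesis using s e' by (simp add: algebra_simps)
    qed
    moreover have "s * K \<le> e'"
    proof -
      have "s < e' / (K + 1)" using s by (simp add: d_def)
      then have "s * (K + 1) < e'" using K by (simp add: field_simps)
      then show ?thesis using s K by (simp add: algebra_simps)
    qed
    ultimately have "norm (1 - scaleR s (x + y)) \<le> (1 + s * e') * (1 + s * e') + s * s * K"
      unfolding eq using norm_triangle_ineq4[of "(1 - scaleR s x) * (1 - scaleR s y)" "scaleR (s * s) (x * y)"]
      by linarith
    also have "\<dots> \<le> 1 + s * e"
    proof -
      have a: "(s * e') * (s * e') \<le> s * e'" using \<open>s * e' \<le> 1\<close> s e'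
        by (simp add: mult_left_le)
      have b: "s * (s * K) \<le> s * e'" using \<open>s * K \<le> e'\<close> s by simp
      have c: "(1 + s * e') * (1 + s * e') = 1 + 2 * (s * e') + (s * e') * (s * e')"
        by (simp add: algebra_simps)
      have d: "s * s * K = s * (s * K)" by simp
      have f: "s * e = 4 * (s * e')" by (simp add: e'_def)
      show ?thesis unfolding c d f using a b by linarith
    qed
    finally show ?thesis .
  qed
  ultimately show "\<exists>d>0. \<forall>s. 0 < s \<and> s < d \<longrightarrow> norm (1 - scaleR s (x + y)) \<le> 1 + s * e" by blast
qed

lemma Acc_sum: "(\<And>i. i \<in> S \<Longrightarrow> Acc (f i)) \<Longrightarrow> Acc (sum f S)"
  by (induction S rule: infinite_finite_induct) (auto simp: Acc_zero Acc_add)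

lemma Acc_lim:
  assumes lim: "(f \<longlongrightarrow> x) sequentially" and ev: "eventually (\<lambda>n. Acc (f n)) sequentially"
  shows "Acc x"
  unfolding Acc_def
proof (intro allI impI)
  fix e :: real assume e: "e > 0"
  have e2: "e / 2 > 0" using e by simp
  have "eventually (\<lambda>n. dist (f n) x < e / 2) sequentially"
    using tendstoD[OF lim e2] .
  with ev have "eventually (\<lambda>n. Acc (f n) \<and> dist (f n) x < e / 2) sequentially"
    by (rule eventually_conj)
  then obtain N where "\<forall>n\<ge>N. Acc (f n) \<and> dist (f n) x < e / 2"
    unfolding eventually_sequentially by blast
  then have n: "Acc (f N)" "dist (f N) x < e / 2" by auto
  from n(1)[unfolded Acc_def, rule_format, OF e2] obtain d where
    d: "d > 0" "\<And>s. 0 < s \<Longrightarrow> s < d \<Longrightarrow> norm (1 - scaleR s (f N)) \<le> 1 + s * (e / 2)"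
    by blast
  have "norm (1 - scaleR s x) \<le> 1 + s * e" if s: "0 < s" "s < d" for s
  proof -
    have eq: "1 - scaleR s x = (1 - scaleR s (f N)) + scaleR s (f N - x)" by (simp add: algebra_simps)
    have ns: "norm (scaleR s (f N - x)) = s * norm (f N - x)" using s by simp
    have "norm (f N - x) < e / 2" using n(2) by (simp add: dist_norm)
    then have "s * norm (f N - x) \<le> s * (e / 2)" using s by simp
    then show ?thesis
      unfolding eq using norm_triangle_ineq[of "1 - scaleR s (f N)" "scaleR s (f N - x)"] ns d(2)[OF s]
      by linarith
  qed
  then show "\<exists>d>0. \<forall>s. 0 < s \<and> s < d \<longrightarrow> norm (1 - scaleR s x) \<le> 1 + s * e" using d(1) by blast
qed

end

context cstar begin

lemma Acc_sq:
  assumes h: "st h = h" shows "Acc (h * h)"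
  unfolding Acc_def
proof (intro allI impI)
  fix e :: real assume e: "e > 0"
  define M where "M = norm h ^ 4"
  have M: "M \<ge> 0" by (simp add: M_def)
  define d where "d = e / (M + 1)"
  have d: "d > 0" using e M by (simp add: d_def)
  have "norm (1 - scaleR s (h * h)) \<le> 1 + s * e" if s: "0 < s" "s < d" for s
  proof -
    define r where "r = sqrt (2 * s)"
    have rr: "r * r = 2 * s" using s by (simp add: r_def)
    define A where "A = 1 - scaleR s (h * h)"
    define B where "B = scaleR r (II * h)"
    define v where "v = A + B"
    have stA: "st A = A" by (simp add: A_def h)
    have stB: "st B = - B" by (simp add: B_def st_II h)
    have stv: "st v = A - B" by (simp add: v_def stA stB)
    have BB: "B * B = - scaleR (2 * s) (h * h)"
    proof -
      have "B * B = scaleR (r * r) ((II * II) * (h * h))"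
        by (simp add: B_def algebra_simps)
      also have "\<dots> = - scaleR (2 * s) (h * h)" by (simp add: rr II_sq)
      finally show ?thesis .
    qed
    have "st v * v = (A - B) * (A + B)" by (simp only: stv) (simp add: v_def)
    also have "\<dots> = A * A - B * B" by (simp add: algebra_simps)
    also have "\<dots> = 1 + scaleR (s * s) ((h * h) * (h * h))"
      by (simp add: BB A_def algebra_simps scaleR_conv_of_real)
    finally have svv: "st v * v = 1 + scaleR (s * s) ((h * h) * (h * h))" .
    have n4: "norm ((h * h) * (h * h)) \<le> M"
    proof -
      have "norm ((h * h) * (h * h)) \<le> norm (h * h) * norm (h * h)" by (rule norm_mult_ineq)
      also have "\<dots> \<le> (norm h * norm h) * (norm h * norm h)"
        by (intro mult_mono norm_mult_ineq) auto
      finally show ?thesis by (simp add: M_def power4_eq_xxxx mult.assoc)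
    qed
    have "(norm v)\<^sup>2 = norm (st v * v)" by (simp add: cstar_id)
    also have "\<dots> \<le> 1 + s * s * M"
      unfolding svv using n4 s
      by (intro order_trans[OF norm_triangle_ineq]) (simp add: mult_left_mono)
    finally have v2: "(norm v)\<^sup>2 \<le> 1 + s * s * M" .
    have "norm v \<le> 1 + s * s * M"
    proof -
      have "norm v \<le> sqrt (1 + s * s * M)" using v2 by (simp add: real_le_rsqrt)
      also have "\<dots> \<le> 1 + s * s * M"
      proof (rule real_le_lsqrt)
        have u: "0 \<le> s * s * M" using M s by simp
        then show "0 \<le> 1 + s * s * M" by simp
        have gen: "1 + u \<le> (1 + u)\<^sup>2" if "0 \<le> u" for u :: real
          using that by (simp add: power2_eq_square)
        show "1 + s * s * M \<le> (1 + s * s * M)\<^sup>2" using gen[OF u] .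
      qed
      finally show ?thesis .
    qed
    have "v + st v = scaleR 2 A" by (simp only: stv) (simp add: v_def scaleR_2)
    then have "A = scaleR (1/2) (v + st v)" by simp
    then have "norm A = (1/2) * norm (v + st v)" by simp
    also have "\<dots> \<le> (1/2) * (norm v + norm (st v))" by (intro mult_left_mono norm_triangle_ineq) simp
    finally have "norm A \<le> (1/2) * (norm v + norm (st v))" .
    then have "norm A \<le> norm v" by simp
    also have "\<dots> \<le> 1 + s * s * M" by fact
    also have "\<dots> \<le> 1 + s * e"
    proof -
      have "s * (M + 1) < e" using s M by (simp add: d_def field_simps)
      then have "s * M \<le> e" using s by (simp add: algebra_simps)
      then show ?thesis using s by (simp add: mult.assoc mult_left_mono)
    qed
    finally show ?thesis by (simp add: A_def)
  qed
  then show "\<exists>d>0. \<forall>s. 0 < s \<and> s < d \<longrightarrow> norm (1 - scaleR s (h * h)) \<le> 1 + s * e" using d by blast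
qed

lemma Acc_stz: "Acc (st z * z)"
proof -
  define h where "h = scaleR (1/2) (z + st z)"
  define k where "k = scaleR (1/2) (- II * (z - st z))"
  have sh: "st h = h" by (simp add: h_def add.commute)
  have sk: "st k = k" by (simp add: k_def st_II algebra_simps)
  define h' where "h' = z + st z"
  define k' where "k' = - II * (z - st z)"
  have "k' * k' = (II * II) * ((z - st z) * (z - st z))" by (simp add: k'_def algebra_simps)
  then have "h' * h' + k' * k' = 4 * (st z * z)" by (simp add: h'_def II_sq algebra_simps)
  also have "\<dots> = scaleR 4 (st z * z)" by (simp add: scaleR_conv_of_real)
  finally have hk: "h' * h' + k' * k' = scaleR 4 (st z * z)" .
  have "h * h + k * k = scaleR (1/4) (h' * h' + k' * k')"
    by (simp add: h_def k_def h'_def k'_def algebra_simps)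
  then have "st z * z = h * h + k * k" by (simp add: hk)
  then show ?thesis using Acc_add[OF Acc_sq[OF sh] Acc_sq[OF sk]] by simp
qed

end

lemma root_pow_eq_1:
  fixes N k :: nat
  assumes N: "N \<ge> 1"
  defines "w \<equiv> exp (2 * pi * \<i> / of_nat N)"
  shows "w ^ k = 1 \<longleftrightarrow> N dvd k"
proof -
  have wk: "w ^ k = exp (complex_of_real (2 * pi * real k / real N) * \<i>)"
    unfolding w_def by (simp add: exp_of_nat_mult[symmetric] field_simps)
  have "w ^ k = 1 \<longleftrightarrow> (\<exists>n::int. 2 * pi * real k / real N = of_int (2 * n) * pi)"
    unfolding wk exp_eq_1 by simp
  also have "\<dots> \<longleftrightarrow> (\<exists>n::int. real k = of_int n * real N)"
    using N by (auto simp: field_simps)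
  also have "\<dots> \<longleftrightarrow> (\<exists>n::int. int k = n * int N)"
    by (metis (mono_tags, opaque_lifting) of_int_eq_iff of_int_mult of_int_of_nat_eq)
  also have "\<dots> \<longleftrightarrow> N dvd k"
    by (metis dvd_def int_dvd_int_iff mult.commute)
  finally show ?thesis .
qed

lemma root_sum:
  fixes N m :: nat
  assumes N: "N \<ge> 2" and m: "m \<le> N"
  defines "w \<equiv> exp (2 * pi * \<i> / of_nat N)"
  shows "(\<Sum>j<N. (w ^ (N - 1 + m)) ^ j) = (if m = 1 then of_nat N else 0)"
proof (cases "m = 1")
  case True
  have e: "N - 1 + m = N" using True N by simp
  have "w ^ N = 1" using N root_pow_eq_1[of N N] unfolding w_def by simp
  then show ?thesis unfolding e using True by simp
next
  case False
  have nd: "\<not> N dvd (N - 1 + m)"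
  proof
    assume "N dvd (N - 1 + m)"
    then obtain q where q: "N - 1 + m = N * q" by (auto simp: dvd_def)
    show False
    proof (cases "q \<le> 1")
      case True
      then have "q = 0 \<or> q = 1" by auto
      then show False using q N False by auto
    next
      case False
      then have "N * q \<ge> N * 2" by (intro mult_left_mono) auto
      then show False using q m N by linarith
    qed
  qed
  have ne: "w ^ (N - 1 + m) \<noteq> 1" using root_pow_eq_1[of N "N - 1 + m"] N nd unfolding w_def by simp
  have "(w ^ (N - 1 + m)) ^ N = (w ^ N) ^ (N - 1 + m)" by (simp add: power_mult[symmetric] mult.commute)
  also have "w ^ N = 1" using root_pow_eq_1[of N N] N unfolding w_def by simp
  finally have "(w ^ (N - 1 + m)) ^ N = 1" by simp
  then show ?thesis using geometric_sum[OF ne, of N] False by simp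
qed

context cstar begin

lemma unit_bound:
  assumes x: "st x = x" and s: "s \<ge> 0" and R: "R \<ge> 0"
    and b1: "norm (1 + scaleR s x) \<le> 1 + s * R" and b2: "norm (1 - scaleR s x) \<le> 1 + s * R"
    and l: "cmod l = 1"
  shows "norm (1 + scaleR s (io l * x)) \<le> sqrt ((1 + s * R)\<^sup>2 + (s * norm x)\<^sup>2)"
proof -
  define a where "a = Re l"
  define b where "b = Im l"
  have ab: "a\<^sup>2 + b\<^sup>2 = 1" using l unfolding a_def b_def cmod_def by simp
  have "a\<^sup>2 \<le> 1" using ab zero_le_power2[of b] by linarith
  then have a1: "\<bar>a\<bar> \<le> 1" by (simp add: abs_square_le_1)
  have b2': "b\<^sup>2 \<le> 1" using ab zero_le_power2[of a] by linarith
  have "l = complex_of_real a + complex_of_real b * \<i>" by (simp add: a_def b_def complex_eq_iff)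
  then have iol: "io l = scaleR a 1 + scaleR b II"
    by (simp add: io_add io_mult io_real II_def)
  define y where "y = 1 + scaleR (s * a) x"
  have sy: "st y = y" by (simp add: y_def x)
  have yeq: "y = scaleR ((1 + a) / 2) (1 + scaleR s x) + scaleR ((1 - a) / 2) (1 - scaleR s x)"
  proof -
    have c1: "(1 + a) / 2 + (1 - a) / 2 = (1::real)" by (simp add: field_simps)
    have c2: "(1 + a) / 2 * s - (1 - a) / 2 * s = s * a" by (simp add: field_simps)
    have "scaleR ((1 + a) / 2) (1 + scaleR s x) + scaleR ((1 - a) / 2) (1 - scaleR s x)
        = scaleR ((1 + a) / 2 + (1 - a) / 2) 1 + scaleR ((1 + a) / 2 * s - (1 - a) / 2 * s) x"
      by (simp only: scaleR_add_left scaleR_diff_left scaleR_add_right scaleR_diff_right scaleR_scaleR)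
         (simp add: algebra_simps)
    then show ?thesis unfolding c1 c2 by (simp add: y_def)
  qed
  then have "norm y \<le> ((1 + a) / 2) * norm (1 + scaleR s x) + ((1 - a) / 2) * norm (1 - scaleR s x)"
  proof -
    have c: "0 \<le> (1 + a) / 2" "0 \<le> (1 - a) / 2" using a1 by auto
    show ?thesis unfolding yeq
      using norm_triangle_ineq[of "scaleR ((1 + a) / 2) (1 + scaleR s x)" "scaleR ((1 - a) / 2) (1 - scaleR s x)"] c
      by simp
  qed
  also have "\<dots> \<le> ((1 + a) / 2) * (1 + s * R) + ((1 - a) / 2) * (1 + s * R)"
    using a1 b1 b2 by (intro add_mono mult_left_mono) auto
  also have "\<dots> = 1 + s * R" by (simp add: field_simps)
  finally have ny: "norm y \<le> 1 + s * R" .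
  define w where "w = 1 + scaleR s (io l * x)"
  define B where "B = scaleR (s * b) (II * x)"
  have w: "w = y + B" by (simp add: w_def y_def B_def iol algebra_simps)
  have sB: "st B = - B" by (simp add: B_def st_II x)
  have "st w * w = (y - B) * (y + B)" by (simp add: w sy sB)
  also have "\<dots> = y * y - B * B" by (simp add: algebra_simps)
  also have "B * B = scaleR ((s * b) * (s * b)) ((II * II) * (x * x))" by (simp add: B_def algebra_simps)
  finally have "st w * w = y * y + scaleR ((s * b)\<^sup>2) (x * x)" by (simp add: II_sq power2_eq_square)
  then have "(norm w)\<^sup>2 = norm (y * y + scaleR ((s * b)\<^sup>2) (x * x))" using cstar_id[of w] by simp
  also have "\<dots> \<le> norm (y * y) + norm (scaleR ((s * b)\<^sup>2) (x * x))" by (rule norm_triangle_ineq)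
  also have "norm (scaleR ((s * b)\<^sup>2) (x * x)) = (s * b)\<^sup>2 * norm (x * x)" by simp
  finally have "(norm w)\<^sup>2 \<le> norm (y * y) + (s * b)\<^sup>2 * norm (x * x)" .
  also have "\<dots> \<le> (1 + s * R)\<^sup>2 + (s * norm x)\<^sup>2"
  proof (rule add_mono)
    have "norm (y * y) \<le> norm y * norm y" by (rule norm_mult_ineq)
    also have "\<dots> \<le> (1 + s * R) * (1 + s * R)" using ny s R by (intro mult_mono) auto
    finally show "norm (y * y) \<le> (1 + s * R)\<^sup>2" by (simp add: power2_eq_square)
    have "(s * b)\<^sup>2 * norm (x * x) \<le> s\<^sup>2 * (norm x * norm x)"
    proof -
      have "b\<^sup>2 * norm (x * x) \<le> 1 * (norm x * norm x)"
        using b2' norm_mult_ineq[of x x] by (intro mult_mono) auto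
      then have "s\<^sup>2 * (b\<^sup>2 * norm (x * x)) \<le> s\<^sup>2 * (norm x * norm x)"
        by (intro mult_left_mono) auto
      then show ?thesis by (simp add: power_mult_distrib mult.assoc)
    qed
    then show "(s * b)\<^sup>2 * norm (x * x) \<le> (s * norm x)\<^sup>2" by (simp add: power2_eq_square algebra_simps)
  qed
  finally show ?thesis unfolding w_def[symmetric] by (simp add: real_le_rsqrt)
qed

end

context cstar begin

lemma RU_identity:
  fixes N :: nat
  assumes N: "N \<ge> 2"
  defines "w \<equiv> exp (2 * pi * \<i> / of_nat N)"
  shows "scaleR (real N * real N * s) x = (\<Sum>j<N. io (w ^ (j * (N - 1))) * (1 + scaleR s (io (w ^ j) * x)) ^ N)"
proof -
  have expand: "io (w ^ (j * (N - 1))) * (1 + scaleR s (io (w ^ j) * x)) ^ N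
      = (\<Sum>m\<le>N. scaleR (real (N choose m) * s ^ m) (io ((w ^ (N - 1 + m)) ^ j) * x ^ m))" for j
  proof -
    have "(1 + scaleR s (io (w ^ j) * x)) ^ N = (scaleR s (io (w ^ j) * x) + 1) ^ N" by (simp add: add.commute)
    also have "\<dots> = (\<Sum>m\<le>N. of_nat (N choose m) * (scaleR s (io (w ^ j) * x)) ^ m * 1 ^ (N - m))"
      by (rule binomial_ring)
    also have "\<dots> = (\<Sum>m\<le>N. scaleR (real (N choose m) * s ^ m) (io (w ^ (j * m)) * x ^ m))"
    proof (rule sum.cong[OF refl])
      fix m
      have "(scaleR s (io (w ^ j) * x)) ^ m = scaleR (s ^ m) (io (w ^ (j * m)) * x ^ m)"
        by (simp add: scaleR_power power_mult_distrib io_power power_mult)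
      then show "of_nat (N choose m) * (scaleR s (io (w ^ j) * x)) ^ m * 1 ^ (N - m)
          = scaleR (real (N choose m) * s ^ m) (io (w ^ (j * m)) * x ^ m)"
        by (simp add: scaleR_conv_of_real)
    qed
    finally have "(1 + scaleR s (io (w ^ j) * x)) ^ N = (\<Sum>m\<le>N. scaleR (real (N choose m) * s ^ m) (io (w ^ (j * m)) * x ^ m))" .
    then have "io (w ^ (j * (N - 1))) * (1 + scaleR s (io (w ^ j) * x)) ^ N
        = (\<Sum>m\<le>N. scaleR (real (N choose m) * s ^ m) (io (w ^ (j * (N - 1))) * io (w ^ (j * m)) * x ^ m))"
      by (simp add: sum_distrib_left mult.assoc)
    also have "\<dots> = (\<Sum>m\<le>N. scaleR (real (N choose m) * s ^ m) (io ((w ^ (N - 1 + m)) ^ j) * x ^ m))"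
    proof (rule sum.cong[OF refl])
      fix m
      have "io (w ^ (j * (N - 1))) * io (w ^ (j * m)) = io ((w ^ (N - 1 + m)) ^ j)"
        by (simp add: io_mult[symmetric] power_add[symmetric] power_mult[symmetric] algebra_simps)
      then show "scaleR (real (N choose m) * s ^ m) (io (w ^ (j * (N - 1))) * io (w ^ (j * m)) * x ^ m)
          = scaleR (real (N choose m) * s ^ m) (io ((w ^ (N - 1 + m)) ^ j) * x ^ m)" by simp
    qed
    finally show ?thesis .
  qed
  have "(\<Sum>j<N. io (w ^ (j * (N - 1))) * (1 + scaleR s (io (w ^ j) * x)) ^ N)
      = (\<Sum>j<N. \<Sum>m\<le>N. scaleR (real (N choose m) * s ^ m) (io ((w ^ (N - 1 + m)) ^ j) * x ^ m))"
    by (rule sum.cong[OF refl]) (rule expand)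
  also have "\<dots> = (\<Sum>m\<le>N. \<Sum>j<N. scaleR (real (N choose m) * s ^ m) (io ((w ^ (N - 1 + m)) ^ j) * x ^ m))"
    by (rule sum.swap)
  also have "\<dots> = (\<Sum>m\<le>N. scaleR (real (N choose m) * s ^ m) (io (\<Sum>j<N. (w ^ (N - 1 + m)) ^ j) * x ^ m))"
    by (simp add: io_sum scaleR_sum_right sum_distrib_right)
  also have "\<dots> = (\<Sum>m\<le>N. if m = 1 then scaleR (real N * s) (io (of_nat N) * x) else 0)"
  proof (rule sum.cong[OF refl])
    fix m assume "m \<in> {..N}"
    then have "m \<le> N" by simp
    then show "scaleR (real (N choose m) * s ^ m) (io (\<Sum>j<N. (w ^ (N - 1 + m)) ^ j) * x ^ m)
        = (if m = 1 then scaleR (real N * s) (io (of_nat N) * x) else 0)"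
      using root_sum[OF N, of m] unfolding w_def by simp
  qed
  also have "\<dots> = scaleR (real N * s) (io (of_nat N) * x)"
    using N by (simp add: sum.delta)
  also have "\<dots> = scaleR (real N * real N * s) x"
    by (simp add: io_of_nat scaleR_conv_of_real algebra_simps)
  finally show ?thesis by simp
qed

end

context cstar begin

lemma RU:
  fixes N :: nat
  assumes x: "st x = x" and R: "R \<ge> 0" and t: "t > 0" and N: "N \<ge> 2"
    and Nb: "(t * norm x)\<^sup>2 \<le> real N" and s: "s = t / real N"
    and b1: "norm (1 + scaleR s x) \<le> 1 + s * R" and b2: "norm (1 - scaleR s x) \<le> 1 + s * R"
  shows "t * norm x \<le> exp (t * R + 1)"
proof -
  define w where "w = exp (2 * pi * \<i> / of_nat N)"
  define K where "K = sqrt ((1 + s * R)\<^sup>2 + (s * norm x)\<^sup>2)"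
  have Npos: "real N > 0" using N by simp
  have s0: "s > 0" using t Npos s by simp
  have K0: "K \<ge> 0" by (simp add: K_def)
  have nw: "cmod (w ^ k) = 1" for k
    by (simp add: w_def norm_power norm_exp_eq_Re)
  have "norm (scaleR (real N * real N * s) x) = norm (\<Sum>j<N. io (w ^ (j * (N - 1))) * (1 + scaleR s (io (w ^ j) * x)) ^ N)"
    using RU_identity[OF N, of s x] unfolding w_def by simp
  also have "\<dots> \<le> (\<Sum>j<N. norm (io (w ^ (j * (N - 1))) * (1 + scaleR s (io (w ^ j) * x)) ^ N))"
    by (rule norm_sum)
  also have "\<dots> \<le> (\<Sum>j<N. K ^ N)"
  proof (rule sum_mono)
    fix j
    have "norm (io (w ^ (j * (N - 1))) * (1 + scaleR s (io (w ^ j) * x)) ^ N)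
        \<le> norm (io (w ^ (j * (N - 1)))) * norm ((1 + scaleR s (io (w ^ j) * x)) ^ N)"
      by (rule norm_mult_ineq)
    also have "\<dots> = norm ((1 + scaleR s (io (w ^ j) * x)) ^ N)" by (simp add: norm_io nw)
    also have "\<dots> \<le> norm (1 + scaleR s (io (w ^ j) * x)) ^ N" by (rule norm_power_ineq)
    also have "\<dots> \<le> K ^ N"
      using unit_bound[OF x less_imp_le[OF s0] R b1 b2 nw[of j]] unfolding K_def
      by (intro power_mono) auto
    finally show "norm (io (w ^ (j * (N - 1))) * (1 + scaleR s (io (w ^ j) * x)) ^ N) \<le> K ^ N" .
  qed
  also have "\<dots> = real N * K ^ N" by simp
  finally have "real N * (real N * s * norm x) \<le> real N * K ^ N"
    using s0 by (simp add: mult.assoc)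
  then have "real N * s * norm x \<le> K ^ N" using Npos by simp
  moreover have "real N * s = t" using s Npos by simp
  ultimately have tx: "t * norm x \<le> K ^ N" by simp
  have "K \<le> 1 + (t * R + 1) / real N"
  proof -
    define A where "A = 1 + s * R"
    define B where "B = (s * norm x)\<^sup>2"
    have A1: "A \<ge> 1" using s0 R by (simp add: A_def)
    have B0: "B \<ge> 0" by (simp add: B_def)
    have "B = (t * norm x)\<^sup>2 / (real N)\<^sup>2" by (simp add: B_def s power_divide power_mult_distrib field_simps)
    also have "\<dots> \<le> real N / (real N)\<^sup>2" using Nb Npos by (simp add: divide_right_mono)
    also have "\<dots> = 1 / real N" using Npos by (simp add: power2_eq_square)
    finally have Bl: "B \<le> 1 / real N" .
    have "K = sqrt (A\<^sup>2 + B)" by (simp add: K_def A_def B_def)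
    also have "\<dots> \<le> A + B"
    proof (rule real_le_lsqrt)
      show "0 \<le> A + B" using A1 B0 by simp
      have "(A + B)\<^sup>2 = A\<^sup>2 + B * (2 * A + B)" by (simp add: power2_eq_square algebra_simps)
      moreover have "B * (2 * A + B) \<ge> B * 1" using A1 B0 by (intro mult_left_mono) auto
      ultimately show "A\<^sup>2 + B \<le> (A + B)\<^sup>2" by simp
    qed
    also have "\<dots> \<le> 1 + t * R / real N + 1 / real N" using Bl by (simp add: A_def s)
    finally show ?thesis by (simp add: add_divide_distrib)
  qed
  then have "K ^ N \<le> (1 + (t * R + 1) / real N) ^ N" using K0 by (intro power_mono) auto
  also have "\<dots> \<le> exp (t * R + 1)"
  proof (rule exp_ge_one_plus_x_over_n_power_n)
    have "0 \<le> t * R" using t R by simp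
    then show "t * R + 1 \<ge> - real N" by linarith
    show "N > 0" using N by simp
  qed
  finally show ?thesis using tx by simp
qed

end

context cstar begin

lemma Acc_mono_aux:
  assumes sa: "st a = a" and sb: "st b = b" and Aa: "Acc a" and Ab: "Acc b" and t: "t > 0"
  shows "t * norm (a - scaleR (norm (a + b) / 2) 1) \<le> exp (t * (norm (a + b) / 2) + 3 / 2)"
proof -
  define M where "M = norm (a + b)"
  define x where "x = a - scaleR (M / 2) 1"
  have M0: "M \<ge> 0" by (simp add: M_def)
  have sx: "st x = x" by (simp add: x_def sa)
  define e where "e = 1 / (4 * t)"
  have e: "e > 0" using t by (simp add: e_def)
  obtain da where da: "da > 0" "\<And>s. 0 < s \<Longrightarrow> s < da \<Longrightarrow> norm (1 - scaleR s a) \<le> 1 + s * e"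
    using Aa e unfolding Acc_def by blast
  obtain db where db: "db > 0" "\<And>s. 0 < s \<Longrightarrow> s < db \<Longrightarrow> norm (1 - scaleR s b) \<le> 1 + s * e"
    using Ab e unfolding Acc_def by blast
  define L where "L = 2 * M * norm b"
  have L0: "L \<ge> 0" using M0 by (simp add: L_def)
  define d where "d = min da (min db (min (1 / (M + 1)) (e / (L + 1))))"
  have d: "d > 0" using da db M0 e L0 by (simp add: d_def)
  define R where "R = M / 2 + 2 * e"
  have R0: "R \<ge> 0" using M0 e by (simp add: R_def)
  have bounds: "norm (1 + scaleR s x) \<le> 1 + s * R \<and> norm (1 - scaleR s x) \<le> 1 + s * R"
    if s: "0 < s" "s < d" for s
  proof
    have sM: "s * M \<le> 1"
    proof -
      have "s < 1 / (M + 1)" using s by (simp add: d_def)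
      then have "s * (M + 1) < 1" using M0 by (simp add: field_simps)
      then show ?thesis using s by (simp add: algebra_simps)
    qed
    have sL: "s * L \<le> e"
    proof -
      have "s < e / (L + 1)" using s by (simp add: d_def)
      then have "s * (L + 1) < e" using L0 by (simp add: field_simps)
      then show ?thesis using s by (simp add: algebra_simps)
    qed
    have na: "norm (1 - scaleR s a) \<le> 1 + s * e" using da(2)[of s] s by (simp add: d_def)
    have nb: "norm (1 - scaleR s b) \<le> 1 + s * e" using db(2)[of s] s by (simp add: d_def)
    have "1 - scaleR s x = (1 - scaleR s a) + scaleR (s * M / 2) 1" by (simp add: x_def algebra_simps)
    then have "norm (1 - scaleR s x) \<le> norm (1 - scaleR s a) + norm (scaleR (s * M / 2) (1::'a))"
      by (simp only: norm_triangle_ineq)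
    moreover have "norm (scaleR (s * M / 2) (1::'a)) = s * M / 2" using s M0 by simp
    ultimately have "norm (1 - scaleR s x) \<le> norm (1 - scaleR s a) + s * M / 2" by simp
    moreover have "s * R = s * M / 2 + 2 * (s * e)" by (simp add: R_def algebra_simps)
    moreover have "0 \<le> s * e" using s e by simp
    ultimately show "norm (1 - scaleR s x) \<le> 1 + s * R" using na by linarith
    define P where "P = scaleR (1 - s * M) 1 + scaleR s (a + b)"
    have nP: "norm P \<le> 1"
    proof -
      have "norm P \<le> norm (scaleR (1 - s * M) (1::'a)) + norm (scaleR s (a + b))"
        unfolding P_def by (rule norm_triangle_ineq)
      also have "\<dots> = (1 - s * M) + s * M" using sM s by (simp add: M_def)
      finally show ?thesis by simp
    qed
    have key: "scaleR (1 - s * M) 1 + scaleR s a = P * (1 - scaleR s b) - scaleR (s * s) (scaleR M b - (a + b) * b)"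
      by (simp add: P_def algebra_simps)
    have "norm (scaleR (s * s) (scaleR M b - (a + b) * b)) \<le> s * s * (M * norm b + M * norm b)"
    proof -
      have "norm (scaleR M b - (a + b) * b) \<le> norm (scaleR M b) + norm ((a + b) * b)"
        by (rule norm_triangle_ineq4)
      also have "norm (scaleR M b) = M * norm b" using M0 by simp
      finally have "norm (scaleR M b - (a + b) * b) \<le> M * norm b + norm ((a + b) * b)" .
      also have "norm ((a + b) * b) \<le> M * norm b" unfolding M_def by (rule norm_mult_ineq)
      finally show ?thesis using s by (simp add: mult_left_mono)
    qed
    also have "\<dots> = s * (s * L)" by (simp add: L_def algebra_simps)
    also have "\<dots> \<le> s * e" using sL s by simp
    finally have nr: "norm (scaleR (s * s) (scaleR M b - (a + b) * b)) \<le> s * e" .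
    have "norm (P * (1 - scaleR s b)) \<le> 1 * (1 + s * e)"
      using nP nb by (intro order_trans[OF norm_mult_ineq] mult_mono) auto
    then have "norm (P * (1 - scaleR s b)) \<le> 1 + s * e" by simp
    then have n1: "norm (scaleR (1 - s * M) 1 + scaleR s a) \<le> 1 + 2 * (s * e)"
      unfolding key using nr norm_triangle_ineq4[of "P * (1 - scaleR s b)" "scaleR (s * s) (scaleR M b - (a + b) * b)"]
      by linarith
    have xeq: "1 + scaleR s x = (scaleR (1 - s * M) 1 + scaleR s a) + scaleR (s * M / 2) 1"
    proof -
      have l: "1 + scaleR s x = scaleR (1 - s * M / 2) 1 + scaleR s a" by (simp add: x_def algebra_simps)
      have r: "(scaleR (1 - s * M) 1 + scaleR s a) + scaleR (s * M / 2) 1 = scaleR ((1 - s * M) + s * M / 2) 1 + scaleR s a"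
        by (simp only: scaleR_add_left) (simp add: algebra_simps)
      have c: "(1 - s * M) + s * M / 2 = 1 - s * M / 2" by simp
      show ?thesis unfolding l r c ..
    qed
    then have "norm (1 + scaleR s x) \<le> 1 + 2 * (s * e) + s * M / 2"
    proof -
      have "norm (scaleR (s * M / 2) (1::'a)) = s * M / 2" using s M0 by simp
      then show ?thesis
        using n1 norm_triangle_ineq[of "scaleR (1 - s * M) 1 + scaleR s a" "scaleR (s * M / 2) (1::'a)"]
        unfolding xeq by linarith
    qed
    moreover have "s * R = s * M / 2 + 2 * (s * e)" by (simp add: R_def algebra_simps)
    ultimately show "norm (1 + scaleR s x) \<le> 1 + s * R" by linarith
  qed
  define N where "N = nat (ceiling ((t * norm x)\<^sup>2 + t / d)) + 2"
  have N2: "N \<ge> 2" by (simp add: N_def)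
  have Nr: "real N \<ge> (t * norm x)\<^sup>2 + t / d + 1"
  proof -
    have "real (nat (ceiling ((t * norm x)\<^sup>2 + t / d))) \<ge> (t * norm x)\<^sup>2 + t / d"
      by (rule real_nat_ceiling_ge)
    then show ?thesis by (simp add: N_def)
  qed
  have td: "t / d \<ge> 0" using t d by simp
  have Nb: "(t * norm x)\<^sup>2 \<le> real N" using Nr td by simp
  define s where "s = t / real N"
  have Npos: "real N > 0" using N2 by simp
  have s0: "s > 0" using t Npos by (simp add: s_def)
  have sd: "s < d"
  proof -
    have "t / d < real N" using Nr zero_le_power2[of "t * norm x"] by linarith
    then have "t < real N * d" using d by (simp add: field_simps)
    then show ?thesis using Npos by (simp add: s_def field_simps)
  qed
  have "t * norm x \<le> exp (t * R + 1)"
    using RU[OF sx R0 t N2 Nb s_def] bounds[OF s0 sd] by blast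
  also have "t * R + 1 = t * (M / 2) + 3 / 2" using t by (simp add: R_def e_def field_simps)
  finally show ?thesis by (simp add: x_def M_def)
qed

lemma Acc_mono:
  assumes sa: "st a = a" and sb: "st b = b" and Aa: "Acc a" and Ab: "Acc b"
  shows "norm a \<le> (exp 3 + 1) * norm (a + b)"
proof -
  define M where "M = norm (a + b)"
  define x where "x = a - scaleR (M / 2) 1"
  have aux: "t * norm x \<le> exp (t * (M / 2) + 3 / 2)" if "t > 0" for t
    using Acc_mono_aux[OF sa sb Aa Ab that] by (simp add: x_def M_def)
  show ?thesis
  proof (cases "M = 0")
    case True
    have "norm x = 0"
    proof (rule ccontr)
      assume "norm x \<noteq> 0"
      then have nx: "norm x > 0" by simp
      have tpos: "(exp (3/2) + 1) / norm x > 0" using nx by (simp add: add_pos_pos)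
      have h: "((exp (3/2) + 1) / norm x) * norm x \<le> exp (((exp (3/2) + 1) / norm x) * (M / 2) + 3 / 2)"
        by (rule aux[OF tpos])
      have "((exp (3/2) + 1) / norm x) * norm x = exp (3/2) + 1" using nx by simp
      with h True show False by simp
    qed
    then show ?thesis using True by (simp add: x_def M_def)
  next
    case False
    then have M: "M > 0" by (simp add: M_def)
    have "(2 / M) * norm x \<le> exp ((2 / M) * (M / 2) + 3 / 2)" using aux[of "2 / M"] M by simp
    also have "(2 / M) * (M / 2) + 3 / 2 = (5 / 2 :: real)" using M by simp
    finally have "norm x \<le> M / 2 * exp (5 / 2)" using M by (simp add: field_simps)
    moreover have "norm a \<le> norm x + M / 2"
    proof -
      have "a = x + scaleR (M / 2) 1" by (simp add: x_def)
      then have "norm a \<le> norm x + norm (scaleR (M / 2) (1::'a))" by (simp only: norm_triangle_ineq)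
      moreover have "norm (scaleR (M / 2) (1::'a)) = M / 2" using M by simp
      ultimately show ?thesis by simp
    qed
    moreover have "exp (5 / 2 :: real) \<le> exp 3" by simp
    moreover have "M / 2 * exp (5 / 2) \<le> M / 2 * exp 3"
      using M by (intro mult_left_mono) auto
    ultimately have "norm a \<le> M / 2 * exp 3 + M / 2" by linarith
    also have "\<dots> \<le> (exp 3 + 1) * M"
    proof -
      have "0 \<le> M * exp 3" using M by simp
      moreover have "(exp 3 + 1) * M = M * exp 3 + M" by (simp add: algebra_simps)
      moreover have "M / 2 * exp 3 = (M * exp 3) / 2" by simp
      ultimately show ?thesis using M by linarith
    qed
    finally show ?thesis by (simp add: M_def)
  qed
qed

lemma Acc_antisym:
  assumes "st a = a" "Acc a" "Acc (- a)" shows "a = 0"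
  using Acc_mono[OF assms(1) _ assms(2) assms(3)] assms(1) by simp

end

context cstar begin

lemma HA_scal: "x \<in> HA st \<Longrightarrow> (\<lambda>k. c * x k) \<in> HA st"
proof -
  assume "x \<in> HA st"
  then have "summable (\<lambda>k. (st c * c) * (st (x k) * x k))" unfolding HA_def by (simp add: summable_mult)
  then show ?thesis unfolding HA_def by (simp add: algebra_simps)
qed

lemma st_stz: "st (st z * z) = st z * z" by (simp add: mult.commute)

lemma Acc_sum_stz: "Acc (\<Sum>k\<in>S. st (f k) * f k)"
  by (rule Acc_sum) (rule Acc_stz)

lemma st_sum_stz: "st (\<Sum>k\<in>S. st (f k) * f k) = (\<Sum>k\<in>S. st (f k) * f k)"
  by (simp add: st_sum mult.commute)

lemma HA_add:
  assumes x: "x \<in> HA st" and y: "y \<in> HA st"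
  shows "(\<lambda>k. x k + y k) \<in> HA st"
proof -
  define C where "C = exp 3 + (1::real)"
  have C: "C > 0" by (simp add: C_def add_pos_pos)
  have sx: "summable (\<lambda>k. st (x k) * x k)" using x by (simp add: HA_def)
  have sy: "summable (\<lambda>k. st (y k) * y k)" using y by (simp add: HA_def)
  have "\<forall>e>0. \<exists>N. \<forall>m\<ge>N. \<forall>n. norm (\<Sum>k\<in>{m..<n}. st (x k + y k) * (x k + y k)) < e"
  proof (intro allI impI)
    fix e :: real assume e: "e > 0"
    define e' where "e' = e / (4 * C)"
    have e': "e' > 0" using e C by (simp add: e'_def)
    obtain N1 where N1: "\<And>m n. m \<ge> N1 \<Longrightarrow> norm (\<Sum>k\<in>{m..<n}. st (x k) * x k) < e'"
      using sx e' unfolding summable_Cauchy by blast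
    obtain N2 where N2: "\<And>m n. m \<ge> N2 \<Longrightarrow> norm (\<Sum>k\<in>{m..<n}. st (y k) * y k) < e'"
      using sy e' unfolding summable_Cauchy by blast
    show "\<exists>N. \<forall>m\<ge>N. \<forall>n. norm (\<Sum>k\<in>{m..<n}. st (x k + y k) * (x k + y k)) < e"
    proof (intro exI allI impI)
      fix m n assume m: "m \<ge> max N1 N2"
      define A where "A = (\<Sum>k\<in>{m..<n}. st (x k + y k) * (x k + y k))"
      define B where "B = (\<Sum>k\<in>{m..<n}. st (x k - y k) * (x k - y k))"
      define U where "U = (\<Sum>k\<in>{m..<n}. st (x k) * x k)"
      define V where "V = (\<Sum>k\<in>{m..<n}. st (y k) * y k)"
      have AB: "A + B = scaleR 2 (U + V)"
        unfolding A_def B_def U_def V_def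
        by (simp add: sum.distrib[symmetric] scaleR_sum_right algebra_simps scaleR_2)
      have sA: "st A = A" unfolding A_def by (rule st_sum_stz)
      have sB: "st B = B" unfolding B_def by (rule st_sum_stz)
      have aA: "Acc A" unfolding A_def by (rule Acc_sum_stz)
      have aB: "Acc B" unfolding B_def by (rule Acc_sum_stz)
      have "norm A \<le> C * norm (A + B)" using Acc_mono[OF sA sB aA aB] by (simp add: C_def)
      also have "\<dots> \<le> C * (2 * (norm U + norm V))"
        using C norm_triangle_ineq[of U V] by (simp add: AB)
      also have "\<dots> < C * (2 * (e' + e'))"
        using N1[of m n] N2[of m n] m C unfolding U_def V_def by simp
      also have "\<dots> = e" using C by (simp add: e'_def field_simps)
      finally show "norm (\<Sum>k\<in>{m..<n}. st (x k + y k) * (x k + y k)) < e" by (simp add: A_def)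
    qed
  qed
  then show ?thesis unfolding HA_def by (simp add: summable_Cauchy)
qed

lemma ip_summable:
  assumes x: "x \<in> HA st" and y: "y \<in> HA st"
  shows "summable (\<lambda>k. st (x k) * y k)"
proof -
  define P where "P c = (\<lambda>k. st (x k + c * y k) * (x k + c * y k))" for c
  have sP: "summable (P c)" for c
    unfolding P_def using HA_add[OF x HA_scal[OF y, of c]] by (simp add: HA_def)
  have eq: "st (x k) * y k = scaleR (1/4) ((P 1 k - P (-1) k) - II * (P II k - P (- II) k))" for k
  proof -
    have "(P 1 k - P (-1) k) - II * (P II k - P (- II) k)
        = 2 * (st (x k) * y k + st (y k) * x k) - II * (2 * (II * (st (x k) * y k)) - 2 * (II * (st (y k) * x k)))"
      by (simp add: P_def st_II algebra_simps)
    also have "\<dots> = 4 * (st (x k) * y k) + (2 * (st (y k) * x k) + (II * II) * (2 * (st (y k) * x k)))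
                  - (II * II + 1) * (2 * (st (x k) * y k)) + 2 * (st (x k) * y k) - 2 * (st (x k) * y k)"
      by (simp add: algebra_simps)
    also have "\<dots> = 4 * (st (x k) * y k)" by (simp add: II_sq)
    also have "\<dots> = scaleR 4 (st (x k) * y k)" by (simp add: scaleR_conv_of_real)
    finally show ?thesis by simp
  qed
  show ?thesis
    unfolding eq
    by (intro summable_scaleR_right summable_diff summable_mult sP)
qed

lemma ip_st:
  assumes x: "x \<in> HA st" and y: "y \<in> HA st"
  shows "st (ipA st x y) = ipA st y x"
  unfolding ipA_def using st_suminf[OF ip_summable[OF x y]] by (simp add: mult.commute)

lemma ip_self_st: "x \<in> HA st \<Longrightarrow> st (ipA st x x) = ipA st x x"
  using ip_st by blast

lemma ip_scal_left:
  assumes x: "x \<in> HA st" and y: "y \<in> HA st"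
  shows "ipA st (\<lambda>k. c * x k) y = st c * ipA st x y"
proof -
  have "ipA st (\<lambda>k. c * x k) y = (\<Sum>k. st c * (st (x k) * y k))"
    unfolding ipA_def by (simp add: mult.assoc)
  also have "\<dots> = st c * ipA st x y" unfolding ipA_def by (rule suminf_mult[OF ip_summable[OF x y]])
  finally show ?thesis .
qed

lemma ip_scal_right:
  assumes x: "x \<in> HA st" and y: "y \<in> HA st"
  shows "ipA st x (\<lambda>k. c * y k) = c * ipA st x y"
proof -
  have "ipA st x (\<lambda>k. c * y k) = (\<Sum>k. c * (st (x k) * y k))"
    unfolding ipA_def by (simp add: algebra_simps)
  also have "\<dots> = c * ipA st x y" unfolding ipA_def by (rule suminf_mult[OF ip_summable[OF x y]])
  finally show ?thesis .
qed

lemma ip_pos: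
  assumes y: "y \<in> HA st" and z: "ipA st y y = 0"
  shows "y j = 0"
proof -
  define p where "p k = st (y k) * y k" for k
  have "summable p" using y unfolding HA_def p_def by simp
  then have "p sums (suminf p)" by (rule summable_sums)
  moreover have "suminf p = 0" using z unfolding ipA_def p_def by simp
  ultimately have sums: "p sums 0" by simp
  then have lim: "(\<lambda>n. \<Sum>k<n. p k) \<longlonglongrightarrow> 0" by (simp add: sums_def)
  have lim2: "(\<lambda>n. (\<Sum>k<n. p k) - p j) \<longlonglongrightarrow> - p j"
    using tendsto_diff[OF lim tendsto_const[of "p j"]] by simp
  have ev: "eventually (\<lambda>n. Acc ((\<Sum>k<n. p k) - p j)) sequentially"
  proof (rule eventually_sequentiallyI[of "Suc j"])
    fix n assume n: "n \<ge> Suc j"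
    then have "j \<in> {..<n}" by simp
    then have "(\<Sum>k<n. p k) - p j = (\<Sum>k\<in>{..<n} - {j}. p k)"
      by (simp add: sum_diff1)
    then show "Acc ((\<Sum>k<n. p k) - p j)" unfolding p_def by (simp add: Acc_sum_stz)
  qed
  have "Acc (- p j)" by (rule Acc_lim[OF lim2 ev])
  moreover have "Acc (p j)" unfolding p_def by (rule Acc_stz)
  moreover have "st (p j) = p j" unfolding p_def by (rule st_stz)
  ultimately have "p j = 0" using Acc_antisym by blast
  then have "norm (y j) ^ 2 = 0" using cstar_id[of "y j"] by (simp add: p_def)
  then show ?thesis by simp
qed

end

context cstar begin

lemma eig_adj:
  assumes adj: "adjointable_with st F G" and normal: "\<forall>x\<in>HA st. F (G x) = G (F x)"
    and x: "x \<in> HA st" and Fx: "F x = (\<lambda>k. \<alpha> * x k)"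
  shows "G x = (\<lambda>k. st \<alpha> * x k)"
proof -
  have FH: "\<And>u. u \<in> HA st \<Longrightarrow> F u \<in> HA st" and GH: "\<And>u. u \<in> HA st \<Longrightarrow> G u \<in> HA st"
    and ad: "\<And>u v. u \<in> HA st \<Longrightarrow> v \<in> HA st \<Longrightarrow> ipA st (F u) v = ipA st u (G v)"
    using adj unfolding adjointable_with_def by blast+
  define g where "g = G x"
  have g: "g \<in> HA st" using GH[OF x] by (simp add: g_def)
  have ax: "(\<lambda>k. \<alpha> * x k) \<in> HA st" by (rule HA_scal[OF x])
  define XX where "XX = ipA st x x"
  have sXX: "st XX = XX" unfolding XX_def by (rule ip_self_st[OF x])
  have a: "ipA st x g = st \<alpha> * XX"
  proof -
    have "ipA st x g = ipA st (F x) x" using ad[OF x x] by (simp add: g_def)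
    also have "\<dots> = st \<alpha> * XX" unfolding Fx XX_def by (rule ip_scal_left[OF x x])
    finally show ?thesis .
  qed
  have b: "ipA st g x = \<alpha> * XX"
  proof -
    have "ipA st g x = st (ipA st x g)" using ip_st[OF x g] by simp
    also have "\<dots> = \<alpha> * XX" by (simp add: a sXX)
    finally show ?thesis .
  qed
  have c: "ipA st g g = \<alpha> * st \<alpha> * XX"
  proof -
    have GFx: "G (F x) \<in> HA st" using GH[OF FH[OF x]] .
    have "ipA st g g = ipA st (F g) x" using ad[OF g x] by (simp add: g_def)
    also have "F g = G (F x)" using normal x by (simp add: g_def)
    also have "ipA st (G (F x)) x = st (ipA st x (G (F x)))" using ip_st[OF x GFx] by simp
    also have "ipA st x (G (F x)) = ipA st (F x) (F x)" using ad[OF x FH[OF x]] by simp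
    also have "ipA st (F x) (F x) = st \<alpha> * (\<alpha> * XX)"
      unfolding Fx XX_def using ip_scal_left[OF x ax] ip_scal_right[OF x x] by simp
    finally show ?thesis by (simp add: sXX mult.assoc mult.commute)
  qed
  define y where "y = (\<lambda>k. g k + (- st \<alpha>) * x k)"
  have y: "y \<in> HA st" unfolding y_def by (rule HA_add[OF g HA_scal[OF x]])
  have sgg: "summable (\<lambda>k. st (g k) * g k)" by (rule ip_summable[OF g g])
  have sgx: "summable (\<lambda>k. st (g k) * x k)" by (rule ip_summable[OF g x])
  have sxg: "summable (\<lambda>k. st (x k) * g k)" by (rule ip_summable[OF x g])
  have sxx: "summable (\<lambda>k. st (x k) * x k)" by (rule ip_summable[OF x x])
  have yy: "st (y k) * y k = (st (g k) * g k + (- st \<alpha>) * (st (g k) * x k))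
       + ((- \<alpha>) * (st (x k) * g k) + (\<alpha> * st \<alpha>) * (st (x k) * x k))" for k
    by (simp add: y_def algebra_simps)
  have "ipA st y y = (\<Sum>k. (st (g k) * g k + (- st \<alpha>) * (st (g k) * x k))
       + ((- \<alpha>) * (st (x k) * g k) + (\<alpha> * st \<alpha>) * (st (x k) * x k)))"
    unfolding ipA_def yy ..
  also have "\<dots> = (\<Sum>k. st (g k) * g k + (- st \<alpha>) * (st (g k) * x k))
       + (\<Sum>k. (- \<alpha>) * (st (x k) * g k) + (\<alpha> * st \<alpha>) * (st (x k) * x k))"
    by (rule suminf_add[symmetric]) (intro summable_add summable_mult sgg sgx sxg sxx)+
  also have "(\<Sum>k. st (g k) * g k + (- st \<alpha>) * (st (g k) * x k))
      = ipA st g g + (- st \<alpha>) * ipA st g x"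
    unfolding ipA_def using suminf_add[OF sgg summable_mult[OF sgx], of "- st \<alpha>"] by (simp only: suminf_mult[OF sgx])
  also have "(\<Sum>k. (- \<alpha>) * (st (x k) * g k) + (\<alpha> * st \<alpha>) * (st (x k) * x k))
      = (- \<alpha>) * ipA st x g + (\<alpha> * st \<alpha>) * ipA st x x"
    unfolding ipA_def using suminf_add[OF summable_mult[OF sxg] summable_mult[OF sxx], of "- \<alpha>" "\<alpha> * st \<alpha>"]
    by (simp only: suminf_mult[OF sxg] suminf_mult[OF sxx])
  also have "ipA st g g + (- st \<alpha>) * ipA st g x + ((- \<alpha>) * ipA st x g + (\<alpha> * st \<alpha>) * ipA st x x) = 0"
    unfolding a b c XX_def[symmetric] by (simp add: algebra_simps)
  finally have "ipA st y y = 0" .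
  then have "y k = 0" for k using ip_pos[OF y] by blast
  then have "g k = st \<alpha> * x k" for k unfolding y_def by (simp add: add_eq_0_iff2 eq_neg_iff_add_eq_0)
  then show ?thesis by (simp add: g_def fun_eq_iff)
qed

end

theorem lemma2p21:
  fixes sc :: "complex \<Rightarrow> 'a::{real_normed_algebra_1,comm_ring_1,banach} \<Rightarrow> 'a"
    and st :: "'a \<Rightarrow> 'a"
    and F Fstar :: "(nat \<Rightarrow> 'a) \<Rightarrow> (nat \<Rightarrow> 'a)"
    and \<alpha>1 \<alpha>2 :: 'a
  assumes "comm_unital_cstar_algebra sc st"
    and "A_linear_op st F" and "bounded_op st F" and "adjointable_with st F Fstar"
    and normal: "\<forall>x\<in>HA st. F (Fstar x) = Fstar (F x)"
    and "\<alpha>1 \<in> sigma_pA st F" and "\<alpha>2 \<in> sigma_pA st F"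
    and "\<exists>b. (\<alpha>1 - \<alpha>2) * b = 1 \<and> b * (\<alpha>1 - \<alpha>2) = 1"
  shows "\<forall>x1\<in>kerA st (\<lambda>x. (\<lambda>k. F x k - scal_op \<alpha>1 x k)). \<forall>x2\<in>kerA st (\<lambda>x. (\<lambda>k. F x k - scal_op \<alpha>2 x k)).
           ipA st x2 x1 = 0"
proof (intro ballI)
  interpret cstar sc st by unfold_locales (rule assms(1))
  have ker: "x \<in> HA st \<and> F x = (\<lambda>k. \<alpha> * x k)" if "x \<in> kerA st (\<lambda>x. (\<lambda>k. F x k - scal_op \<alpha> x k))" for x \<alpha>
    using that unfolding kerA_def scal_op_def by (auto simp: fun_eq_iff)
  fix x1 x2
  assume h1: "x1 \<in> kerA st (\<lambda>x. (\<lambda>k. F x k - scal_op \<alpha>1 x k))"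
    and h2: "x2 \<in> kerA st (\<lambda>x. (\<lambda>k. F x k - scal_op \<alpha>2 x k))"
  have x1: "x1 \<in> HA st" and F1: "F x1 = (\<lambda>k. \<alpha>1 * x1 k)" using ker[OF h1] by auto
  have x2: "x2 \<in> HA st" and F2: "F x2 = (\<lambda>k. \<alpha>2 * x2 k)" using ker[OF h2] by auto
  have G1: "Fstar x1 = (\<lambda>k. st \<alpha>1 * x1 k)" by (rule eig_adj[OF assms(4) normal x1 F1])
  have ad: "ipA st (F x2) x1 = ipA st x2 (Fstar x1)"
    using assms(4) x1 x2 unfolding adjointable_with_def by blast
  have "ipA st (F x2) x1 = st \<alpha>2 * ipA st x2 x1" unfolding F2 by (rule ip_scal_left[OF x2 x1])
  moreover have "ipA st x2 (Fstar x1) = st \<alpha>1 * ipA st x2 x1" unfolding G1 by (rule ip_scal_right[OF x2 x1])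
  ultimately have eq: "(st \<alpha>1 - st \<alpha>2) * ipA st x2 x1 = 0" using ad by (simp add: algebra_simps)
  obtain b where b: "(\<alpha>1 - \<alpha>2) * b = 1" using assms(8) by blast
  have "st ((\<alpha>1 - \<alpha>2) * b) = 1" using b by simp
  then have sb: "(st \<alpha>1 - st \<alpha>2) * st b = 1" by simp
  have "ipA st x2 x1 = ((st \<alpha>1 - st \<alpha>2) * st b) * ipA st x2 x1" using sb by simp
  also have "\<dots> = st b * ((st \<alpha>1 - st \<alpha>2) * ipA st x2 x1)" by (simp add: algebra_simps)
  also have "\<dots> = 0" using eq by simp
  finally show "ipA st x2 x1 = 0" .
qed


end
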